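(* Let $H$ be an undirected connected planarly embedded graph whose perimeter is a simple polygonal curve, such that all interior vertices have degree at least 6 and all interior faces are triangles. For a boundary vertex $x\in\partial H$ let $\deg(x)\ge 2$ denote its degree. Then $$\sum_{x\in\partial H}\max(4-\deg(x),0)\ge 6.$$ *)

theory Defs
  imports Main
begin

text \<open>Plane graphs are represented combinatorially as rotation systems (combinatorial maps):
  a finite set of darts D (half-edges), a fixed-point-free involution alpha (the two halves
  of an edge), and a permutation sigma (cyclic order of darts around their tail vertex).
  A connected map is planarly embedded (on the sphere) iff V - E + F = 2.\<close>

definition orb :: "('a \<Rightarrow> 'a) \<Rightarrow> 'a \<Rightarrow> 'a set" where
  "orb f x = {(f ^^ n) x | n. True}"

definition face_perm :: "('a \<Rightarrow> 'a) \<Rightarrow> ('a \<Rightarrow> 'a) \<Rightarrow> 'a \<Rightarrow> 'a" where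
  "face_perm \<alpha> \<sigma> = \<sigma> \<circ> \<alpha>"

definition map_vertices :: "'a set \<Rightarrow> ('a \<Rightarrow> 'a) \<Rightarrow> 'a set set" where
  "map_vertices D \<sigma> = orb \<sigma> ` D"

definition map_edges :: "'a set \<Rightarrow> ('a \<Rightarrow> 'a) \<Rightarrow> 'a set set" where
  "map_edges D \<alpha> = orb \<alpha> ` D"

definition map_faces :: "'a set \<Rightarrow> ('a \<Rightarrow> 'a) \<Rightarrow> ('a \<Rightarrow> 'a) \<Rightarrow> 'a set set" where
  "map_faces D \<alpha> \<sigma> = orb (face_perm \<alpha> \<sigma>) ` D"

definition comb_map :: "'a set \<Rightarrow> ('a \<Rightarrow> 'a) \<Rightarrow> ('a \<Rightarrow> 'a) \<Rightarrow> bool" where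
  "comb_map D \<alpha> \<sigma> \<longleftrightarrow> finite D \<and> bij_betw \<alpha> D D \<and> bij_betw \<sigma> D D \<and>
     (\<forall>d\<in>D. \<alpha> (\<alpha> d) = d \<and> \<alpha> d \<noteq> d)"

definition map_connected :: "'a set \<Rightarrow> ('a \<Rightarrow> 'a) \<Rightarrow> ('a \<Rightarrow> 'a) \<Rightarrow> bool" where
  "map_connected D \<alpha> \<sigma> \<longleftrightarrow>
     (\<forall>d\<in>D. \<forall>e\<in>D. (d, e) \<in> ({(x, \<alpha> x) | x. x \<in> D} \<union> {(x, \<sigma> x) | x. x \<in> D})\<^sup>*)"

definition map_simple :: "'a set \<Rightarrow> ('a \<Rightarrow> 'a) \<Rightarrow> ('a \<Rightarrow> 'a) \<Rightarrow> bool" where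
  "map_simple D \<alpha> \<sigma> \<longleftrightarrow>
     (\<forall>d\<in>D. orb \<sigma> (\<alpha> d) \<noteq> orb \<sigma> d) \<and>
     (\<forall>d\<in>D. \<forall>e\<in>D. orb \<sigma> d = orb \<sigma> e \<and> orb \<sigma> (\<alpha> d) = orb \<sigma> (\<alpha> e) \<longrightarrow> d = e)"

definition map_planar :: "'a set \<Rightarrow> ('a \<Rightarrow> 'a) \<Rightarrow> ('a \<Rightarrow> 'a) \<Rightarrow> bool" where
  "map_planar D \<alpha> \<sigma> \<longleftrightarrow>
     int (card (map_vertices D \<sigma>)) - int (card (map_edges D \<alpha>))
       + int (card (map_faces D \<alpha> \<sigma>)) = 2"

definition vdeg :: "'a set \<Rightarrow> nat" where
  "vdeg v = card v"

definition boundary_vertices :: "('a \<Rightarrow> 'a) \<Rightarrow> 'a set \<Rightarrow> 'a set set" where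
  "boundary_vertices \<sigma> Out = orb \<sigma> ` Out"

definition triangulated_disk :: "'a set \<Rightarrow> ('a \<Rightarrow> 'a) \<Rightarrow> ('a \<Rightarrow> 'a) \<Rightarrow> 'a set \<Rightarrow> bool" where
  "triangulated_disk D \<alpha> \<sigma> Out \<longleftrightarrow>
     comb_map D \<alpha> \<sigma> \<and> map_connected D \<alpha> \<sigma> \<and> map_simple D \<alpha> \<sigma> \<and> map_planar D \<alpha> \<sigma> \<and>
     Out \<in> map_faces D \<alpha> \<sigma> \<and> card Out \<ge> 3 \<and>
     (\<forall>d\<in>Out. \<forall>e\<in>Out. orb \<sigma> d = orb \<sigma> e \<longrightarrow> d = e) \<and>
     (\<forall>F\<in>map_faces D \<alpha> \<sigma>. F \<noteq> Out \<longrightarrow> card F = 3) \<and>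
     (\<forall>v\<in>map_vertices D \<sigma>. v \<notin> boundary_vertices \<sigma> Out \<longrightarrow> vdeg v \<ge> 6)"

end

theory Submission
  imports Defs
begin

lemma funpow_in_D:
  assumes "f ` D \<subseteq> D" "d \<in> D"
  shows "(f ^^ n) d \<in> D"
  using assms by (induction n) auto

lemma orb_sub:
  assumes "f ` D \<subseteq> D" "d \<in> D"
  shows "orb f d \<subseteq> D"
  using funpow_in_D[OF assms] unfolding orb_def by auto

lemma self_in_orb: "d \<in> orb f d"
  unfolding orb_def by (auto intro: exI[of _ 0])

lemma orb_period:
  assumes "bij_betw f D D" "finite D" "d \<in> D"
  obtains p where "p > 0" "(f ^^ p) d = d"
proof -
  define g where "g x = (if x \<in> D then f x else x)" for x
  have im: "f ` D \<subseteq> D" using bij_betw_imp_surj_on[OF assms(1)] by simp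
  have ij: "inj_on f D" using assms(1) by (simp add: bij_betw_def)
  have "inj g"
  proof (rule injI)
    fix x y assume "g x = g y"
    then show "x = y"
      using im ij unfolding g_def
      by (auto split: if_splits simp: inj_on_def)
  qed
  have gf: "(g ^^ n) d = (f ^^ n) d" for n
  proof (induction n)
    case 0 then show ?case by simp
  next
    case (Suc n)
    have "(f ^^ n) d \<in> D" using funpow_in_D[OF im assms(3)] .
    then show ?case using Suc by (simp add: g_def)
  qed
  have "{y. \<exists>n. y = (g ^^ n) d} \<subseteq> D"
    using funpow_in_D[OF im assms(3)] gf by auto
  then have "finite {y. \<exists>n. y = (g ^^ n) d}" using assms(2) finite_subset by blast
  then obtain n where "n > 0" "(g ^^ n) d = d"
    using funpow_inj_finite[OF \<open>inj g\<close>] by blast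
  moreover have "(f ^^ n) d = d" using gf \<open>(g ^^ n) d = d\<close> by simp
  ultimately show thesis using that by blast
qed

lemma funpow_period_mult:
  assumes "(f ^^ p) d = d"
  shows "(f ^^ (p * k)) d = d"
proof (induction k)
  case 0 then show ?case by simp
next
  case (Suc k)
  have "(f ^^ (p * Suc k)) d = (f ^^ p) ((f ^^ (p * k)) d)"
    by (simp only: mult_Suc_right funpow_add o_apply)
  then show ?case using Suc assms by simp
qed

lemma orb_trans:
  assumes "x \<in> orb f y"
  shows "orb f x \<subseteq> orb f y"
proof
  fix z assume "z \<in> orb f x"
  then obtain m where z: "z = (f ^^ m) x" unfolding orb_def by auto
  obtain n where x: "x = (f ^^ n) y" using assms unfolding orb_def by auto
  have "z = (f ^^ (m + n)) y" using z x by (simp add: funpow_add)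
  then show "z \<in> orb f y" unfolding orb_def by auto
qed

lemma orb_sym:
  assumes "bij_betw f D D" "finite D" "y \<in> D" "x \<in> orb f y"
  shows "y \<in> orb f x"
proof -
  obtain p where p: "p > 0" "(f ^^ p) y = y" using orb_period[OF assms(1-3)] by blast
  obtain n where x: "x = (f ^^ n) y" using assms(4) unfolding orb_def by auto
  have "p * n \<ge> n" using p by simp
  then have eq: "p * n - n + n = p * n" by simp
  have "(f ^^ (p * n - n)) x = (f ^^ (p * n - n + n)) y"
    using x by (simp only: funpow_add o_apply)
  also have "\<dots> = (f ^^ (p * n)) y" using eq by simp
  also have "\<dots> = y" using funpow_period_mult[OF p(2)] .
  finally show ?thesis unfolding orb_def by (auto intro: exI[of _ "p * n - n"])
qed

lemma orb_eq:
  assumes "bij_betw f D D" "finite D" "y \<in> D" "x \<in> orb f y"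
  shows "orb f x = orb f y"
  using orb_trans[OF assms(4)] orb_trans[OF orb_sym[OF assms]] by blast

lemma orb_sum_card:
  assumes "bij_betw f D D" "finite D"
  shows "(\<Sum>Q\<in>orb f ` D. card Q) = card D"
proof -
  have im: "f ` D \<subseteq> D" using bij_betw_imp_surj_on[OF assms(1)] by simp
  have U: "\<Union> (orb f ` D) = D"
  proof
    show "\<Union> (orb f ` D) \<subseteq> D"
    proof (rule Union_least)
      fix X assume "X \<in> orb f ` D"
      then obtain a where "a \<in> D" "X = orb f a" by blast
      then show "X \<subseteq> D" using orb_sub[OF im] by blast
    qed
    show "D \<subseteq> \<Union> (orb f ` D)"
    proof
      fix d assume "d \<in> D"
      then have "orb f d \<in> orb f ` D" by (rule imageI)
      then show "d \<in> \<Union> (orb f ` D)" using self_in_orb by (rule UnionI)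
    qed
  qed
  have fin: "finite Q" if Qin: "Q \<in> orb f ` D" for Q
  proof -
    obtain a where a: "a \<in> D" "Q = orb f a" using Qin by blast
    have "Q \<subseteq> D" using orb_sub[OF im a(1)] a(2) by simp
    then show ?thesis using assms(2) by (rule finite_subset)
  qed
  have disj: "\<forall>A\<in>orb f ` D. \<forall>B\<in>orb f ` D. A \<noteq> B \<longrightarrow> A \<inter> B = {}"
  proof (intro ballI impI)
    fix A B assume A: "A \<in> orb f ` D" and B: "B \<in> orb f ` D" and ne: "A \<noteq> B"
    obtain a where a: "a \<in> D" "A = orb f a" using A by auto
    obtain b where b: "b \<in> D" "B = orb f b" using B by auto
    show "A \<inter> B = {}"
    proof (rule ccontr)
      assume "A \<inter> B \<noteq> {}"
      then obtain z where z: "z \<in> orb f a" "z \<in> orb f b" using a b by blast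
      have "orb f z = orb f a" by (rule orb_eq[OF assms a(1) z(1)])
      moreover have "orb f z = orb f b" by (rule orb_eq[OF assms b(1) z(2)])
      ultimately have "orb f a = orb f b" by simp
      then show False using ne a b by simp
    qed
  qed
  have "card (\<Union> (orb f ` D)) = (\<Sum>Q\<in>orb f ` D. card Q)"
  proof (rule card_Union_disjoint)
    show "pairwise disjnt (orb f ` D)" unfolding pairwise_def disjnt_def using disj by blast
  qed (rule fin)
  then show ?thesis using U by simp
qed

lemma orb_invol:
  assumes "\<alpha> (\<alpha> d) = d"
  shows "orb \<alpha> d = {d, \<alpha> d}"
proof -
  have "(\<alpha> ^^ n) d = (if even n then d else \<alpha> d)" for n
    by (induction n) (auto simp: assms)
  then show ?thesis unfolding orb_def
    by (auto intro: exI[of _ 0] exI[of _ 1])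
qed

theorem lemma8p1:
  fixes D :: "'a set" and \<alpha> \<sigma> :: "'a \<Rightarrow> 'a" and Out :: "'a set"
  assumes "triangulated_disk D \<alpha> \<sigma> Out"
  shows "(\<Sum>x\<in>boundary_vertices \<sigma> Out. max (4 - int (vdeg x)) 0) \<ge> 6"
proof -
  have A1: "comb_map D \<alpha> \<sigma>" and A4: "map_planar D \<alpha> \<sigma>"
    and A5: "Out \<in> map_faces D \<alpha> \<sigma>"
    and A7: "\<forall>d\<in>Out. \<forall>e\<in>Out. orb \<sigma> d = orb \<sigma> e \<longrightarrow> d = e"
    and A8: "\<forall>F\<in>map_faces D \<alpha> \<sigma>. F \<noteq> Out \<longrightarrow> card F = 3"
    and A9: "\<forall>v\<in>map_vertices D \<sigma>. v \<notin> boundary_vertices \<sigma> Out \<longrightarrow> vdeg v \<ge> 6"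
    using assms unfolding triangulated_disk_def by blast+
  have cm: "finite D" "bij_betw \<alpha> D D" "bij_betw \<sigma> D D"
    "\<forall>d\<in>D. \<alpha> (\<alpha> d) = d \<and> \<alpha> d \<noteq> d"
    using A1 unfolding comb_map_def by blast+
  define V where "V = map_vertices D \<sigma>"
  define E where "E = map_edges D \<alpha>"
  define F where "F = map_faces D \<alpha> \<sigma>"
  define B where "B = boundary_vertices \<sigma> Out"
  have eul: "int (card V) - int (card E) + int (card F) = 2"
    using A4 unfolding map_planar_def V_def E_def F_def .
  have fin: "finite V" "finite E" "finite F"
    unfolding V_def E_def F_def map_vertices_def map_edges_def map_faces_def
    using cm(1) by (rule finite_imageI)+
  have phib: "bij_betw (face_perm \<alpha> \<sigma>) D D"
    unfolding face_perm_def using cm(2,3) by (rule bij_betw_trans)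
  have sV: "(\<Sum>v\<in>V. card v) = card D"
    unfolding V_def map_vertices_def using orb_sum_card[OF cm(3,1)] .
  have sF: "(\<Sum>v\<in>F. card v) = card D"
    unfolding F_def map_faces_def using orb_sum_card[OF phib cm(1)] .
  have sE: "(\<Sum>v\<in>E. card v) = card D"
    unfolding E_def map_edges_def using orb_sum_card[OF cm(2,1)] .
  have c2: "card e = 2" if eE: "e \<in> E" for e
  proof -
    obtain d where d: "d \<in> D" "e = orb \<alpha> d" using eE unfolding E_def map_edges_def by blast
    have inv: "\<alpha> (\<alpha> d) = d" "\<alpha> d \<noteq> d" using cm(4) d(1) by blast+
    have "e = {d, \<alpha> d}" using orb_invol[of \<alpha> d, OF inv(1)] d(2) by simp
    then show ?thesis using inv(2) by simp
  qed
  have "(\<Sum>v\<in>E. card v) = (\<Sum>v\<in>E. 2)" using c2 by (rule sum.cong[OF refl])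
  then have dE: "card D = 2 * card E" using sE by simp
  have OutF: "Out \<in> F" using A5 unfolding F_def .
  have F3: "\<forall>f\<in>F. f \<noteq> Out \<longrightarrow> card f = 3" using A8 unfolding F_def .
  have "(\<Sum>v\<in>F. card v) = card Out + (\<Sum>v\<in>F - {Out}. card v)"
    using sum.remove[OF fin(3) OutF] by simp
  also have "(\<Sum>v\<in>F - {Out}. card v) = (\<Sum>v\<in>F - {Out}. 3)"
    using F3 by (intro sum.cong) auto
  finally have dF: "card D = card Out + 3 * (card F - 1)"
    using sF fin(3) OutF by (simp add: card_Diff_singleton)
  have Fpos: "card F \<ge> 1" using fin(3) OutF card_0_eq by fastforce
  have OutD: "Out \<subseteq> D"
  proof -
    obtain d where d: "d \<in> D" "Out = orb (face_perm \<alpha> \<sigma>) d"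
      using OutF unfolding F_def map_faces_def by blast
    have imp: "face_perm \<alpha> \<sigma> ` D \<subseteq> D" using bij_betw_imp_surj_on[OF phib] by simp
    have "orb (face_perm \<alpha> \<sigma>) d \<subseteq> D" by (rule orb_sub[OF imp d(1)])
    then show ?thesis using d(2) by simp
  qed
  have BV: "B \<subseteq> V" unfolding B_def V_def boundary_vertices_def map_vertices_def
    using OutD by (rule image_mono)
  have injO: "inj_on (orb \<sigma>) Out" using A7 unfolding inj_on_def by blast
  have cB: "card B = card Out" unfolding B_def boundary_vertices_def
    using card_image[OF injO] .
  have int6: "\<forall>v\<in>V - B. card v \<ge> 6"
    using A9 unfolding V_def B_def vdeg_def by blast
  have "(\<Sum>v\<in>V. card v) = (\<Sum>v\<in>B. card v) + (\<Sum>v\<in>V - B. card v)"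
    using sum.subset_diff[OF BV fin(1), of card] by (simp add: add.commute)
  moreover have "(\<Sum>v\<in>V - B. card v) \<ge> (\<Sum>v\<in>V - B. 6)"
    using int6 by (intro sum_mono) auto
  moreover have "card (V - B) = card V - card B" using card_Diff_subset BV fin(1) finite_subset by metis
  moreover have "card B \<le> card V" using BV fin(1) card_mono by blast
  ultimately have k1: "(\<Sum>v\<in>B. card v) + 6 * (card V - card B) \<le> card D"
    using sV by simp
  have cBV: "card B \<le> card V" using BV fin(1) card_mono by blast
  have key: "int (\<Sum>v\<in>B. card v) + 6 * (int (card V) - int (card B)) \<le> int (card D)"
  proof -
    have "int ((\<Sum>v\<in>B. card v) + 6 * (card V - card B)) \<le> int (card D)"
      using k1 by (simp only: of_nat_le_iff)
    then show ?thesis using cBV by (simp add: of_nat_diff)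
  qed
  have "(\<Sum>x\<in>B. 4 - int (card x)) \<le> (\<Sum>x\<in>B. max (4 - int (vdeg x)) 0)"
    by (intro sum_mono) (auto simp: vdeg_def)
  moreover have "(\<Sum>x\<in>B. 4 - int (card x)) = 4 * int (card B) - int (\<Sum>x\<in>B. card x)"
    by (simp add: sum_subtractf of_nat_sum)
  ultimately have s1: "4 * int (card B) - int (\<Sum>x\<in>B. card x) \<le> (\<Sum>x\<in>B. max (4 - int (vdeg x)) 0)"
    by simp
  have dE': "int (card D) = 2 * int (card E)" using dE by simp
  have dF': "int (card D) = int (card Out) + 3 * (int (card F) - 1)" using dF Fpos by (simp add: of_nat_diff)
  have cB': "int (card B) = int (card Out)" using cB by simp
  have "6 \<le> 4 * int (card B) - int (\<Sum>x\<in>B. card x)"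
    using key eul dE' dF' cB' by (smt (verit))
  then show ?thesis using s1 unfolding B_def by linarith
qed

end
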